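(* Let $h$ be the Hahn sequence space, let $\Delta:h\to h$ be the forward difference operator $(\Delta x)_k=x_k-x_{k+1}$, and let $\Delta^*:h^*\to h^*$ be its adjoint. Then $\sigma_r(\Delta,h)=\sigma_p(\Delta^*,h^* )$.
   Context: Sequences are indexed by $\mathbb{N}=\{0,1,2,\dots\}$. The Hahn sequence space is $h=\{x=(x_k):\sum_{k=1}^\infty k|x_k-x_{k+1}|<\infty \text{ and } \lim_{k\to\infty}x_k=0\}$, a Banach space with norm $\|x\|_h=\sum_k k|x_k-x_{k+1}|+\sup_k|x_k|$. $\Delta$ is given by the matrix with $1$ on the main diagonal and $-1$ on the first superdiagonal. $h^*$ is the Banach dual of $h$ and $(\Delta^*f)(x)=f(\Delta x)$. For a bounded operator $T$ on a Banach space $X$: $\sigma_p(T,X)$ is the set of $\alpha\in\mathbb{C}$ with $\alpha I-T$ not injective; the residual spectrum $\sigma_r(T,X)$ is the set of $\alpha\in\mathbb{C}$ such that $\alpha I-T$ is injective but its range $R(\alpha I-T)$ is not dense in $X$. *)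

theory Defs
  imports "HOL-Analysis.Analysis"
begin

text \<open>Hahn sequence space over the complex numbers (sequences indexed by nat).
  The k = 0 term of the weighted sum vanishes, so summing from 0 agrees with
  summing from 1.\<close>
definition hahn :: "(nat \<Rightarrow> complex) set" where
  "hahn = {x. summable (\<lambda>k. real k * cmod (x k - x (Suc k))) \<and> x \<longlonglongrightarrow> 0}"

definition hahn_norm :: "(nat \<Rightarrow> complex) \<Rightarrow> real" where
  "hahn_norm x = (\<Sum>k. real k * cmod (x k - x (Suc k))) + (SUP k. cmod (x k))"

definition Delta :: "(nat \<Rightarrow> complex) \<Rightarrow> (nat \<Rightarrow> complex)" where
  "Delta x = (\<lambda>k. x k - x (Suc k))"

text \<open>Banach dual of h: bounded linear functionals on h (two functionals are
  identified iff they agree on h).\<close>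
definition hahn_dual :: "((nat \<Rightarrow> complex) \<Rightarrow> complex) set" where
  "hahn_dual = {f. (\<forall>x\<in>hahn. \<forall>y\<in>hahn. f (\<lambda>k. x k + y k) = f x + f y)
                 \<and> (\<forall>c. \<forall>x\<in>hahn. f (\<lambda>k. c * x k) = c * f x)
                 \<and> (\<exists>C. \<forall>x\<in>hahn. cmod (f x) \<le> C * hahn_norm x)}"

definition Delta_adj :: "((nat \<Rightarrow> complex) \<Rightarrow> complex) \<Rightarrow> ((nat \<Rightarrow> complex) \<Rightarrow> complex)" where
  "Delta_adj f = (\<lambda>x. f (Delta x))"

definition point_spectrum_Delta_adj :: "complex set" where
  "point_spectrum_Delta_adj = {\<alpha>. \<exists>f\<in>hahn_dual. (\<exists>x\<in>hahn. f x \<noteq> 0) \<and>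
      (\<forall>x\<in>hahn. \<alpha> * f x - Delta_adj f x = 0)}"

definition residual_spectrum_Delta :: "complex set" where
  "residual_spectrum_Delta = {\<alpha>.
      inj_on (\<lambda>x. (\<lambda>k. \<alpha> * x k - Delta x k)) hahn \<and>
      \<not> (\<forall>y\<in>hahn. \<forall>\<epsilon>>0. \<exists>x\<in>hahn. hahn_norm (\<lambda>k. y k - (\<alpha> * x k - Delta x k)) < \<epsilon>)}"

end

theory Submission
  imports Defs
begin

definition trunc :: "nat \<Rightarrow> (nat \<Rightarrow> complex) \<Rightarrow> nat \<Rightarrow> complex" where
  "trunc n x = (\<lambda>k. if k \<le> n then x k else 0)"
definition tailseq :: "nat \<Rightarrow> (nat \<Rightarrow> complex) \<Rightarrow> nat \<Rightarrow> complex" where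
  "tailseq n x = (\<lambda>k. if k \<le> n then 0 else x k)"
definition aa :: "(nat \<Rightarrow> complex) \<Rightarrow> nat \<Rightarrow> real" where
  "aa x k = real k * cmod (x k - x (Suc k))"
definition TT :: "(nat \<Rightarrow> complex) \<Rightarrow> nat \<Rightarrow> real" where
  "TT x m = (\<Sum>j. aa x (j + m))"

lemma hahn_eventually_eq:
  assumes "x \<in> hahn" "\<And>k. k > n \<Longrightarrow> y k = x k"
  shows "y \<in> hahn"
proof -
  have ev: "eventually (\<lambda>k. y k = x k) sequentially"
    using eventually_gt_at_top[of n] by (rule eventually_mono) (rule assms(2))
  have "eventually (\<lambda>k. real k * cmod (y k - y (Suc k)) = real k * cmod (x k - x (Suc k))) sequentially"
    using eventually_gt_at_top[of n] by (rule eventually_mono) (simp add: assms(2))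
  hence "summable (\<lambda>k. real k * cmod (y k - y (Suc k)))"
    using assms(1) summable_cong unfolding hahn_def by fastforce
  moreover have "y \<longlonglongrightarrow> 0" using assms(1) tendsto_cong[OF ev] unfolding hahn_def by auto
  ultimately show ?thesis unfolding hahn_def by auto
qed

lemma zero_hahn: "(\<lambda>k. 0) \<in> hahn"
  unfolding hahn_def by simp

lemma fin_supp_hahn: "(\<And>k. k > n \<Longrightarrow> y k = 0) \<Longrightarrow> y \<in> hahn"
  using hahn_eventually_eq[OF zero_hahn] by blast

context
  fixes x assumes xh: "x \<in> hahn"
begin

lemma sa: "summable (aa x)"
  using xh unfolding hahn_def aa_def by auto

lemma xlim: "x \<longlonglongrightarrow> 0"
  using xh unfolding hahn_def by auto

lemma aa_nonneg: "0 \<le> aa x k" unfolding aa_def by simp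

lemma TT_eq: "TT x m = suminf (aa x) - sum (aa x) {..<m}"
  unfolding TT_def using suminf_minus_initial_segment[OF sa] by simp

lemma TT_nonneg: "0 \<le> TT x m"
  unfolding TT_def by (rule suminf_nonneg) (use sa aa_nonneg in auto)

lemma TT_mono: "m \<le> k \<Longrightarrow> TT x k \<le> TT x m"
  unfolding TT_eq by (auto intro!: sum_mono2 aa_nonneg)

lemma TT_lim: "TT x \<longlonglongrightarrow> 0"
proof -
  have "(\<lambda>m. suminf (aa x) - sum (aa x) {..<m}) \<longlonglongrightarrow> suminf (aa x) - suminf (aa x)"
    by (intro tendsto_diff tendsto_const summable_LIMSEQ sa)
  thus ?thesis unfolding TT_eq by simp
qed

lemma xbound:
  assumes "0 \<le> c" "c \<le> real m"
  shows "c * cmod (x m) \<le> TT x m"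
proof -
  have "(\<lambda>j. x (j + m)) \<longlonglongrightarrow> 0" using LIMSEQ_ignore_initial_segment[OF xlim] .
  hence "(\<lambda>j. x (Suc j + m) - x (j + m)) sums (0 - x (0 + m))"
    by (rule telescope_sums)
  hence s: "(\<lambda>j. x (j + m) - x (Suc (j + m))) sums x m"
    using sums_minus by fastforce
  hence s2: "(\<lambda>j. complex_of_real c * (x (j + m) - x (Suc (j + m)))) sums (complex_of_real c * x m)"
    by (rule sums_mult)
  have "norm (\<Sum>j. complex_of_real c * (x (j + m) - x (Suc (j + m)))) \<le> (\<Sum>j. aa x (j + m))"
  proof (rule norm_suminf_le)
    fix j
    have "c \<le> real (j + m)" using assms by simp
    thus "norm (complex_of_real c * (x (j + m) - x (Suc (j + m)))) \<le> aa x (j + m)"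
      unfolding aa_def using assms by (simp add: norm_mult mult_right_mono)
  next
    show "summable (\<lambda>j. aa x (j + m))" using sa by simp
  qed
  moreover have "norm (complex_of_real c * x m) = c * cmod (x m)"
    using assms by (simp add: norm_mult)
  ultimately show ?thesis using sums_unique[OF s2] unfolding TT_def by simp
qed

lemma tail_norm:
  shows "hahn_norm (tailseq n x) \<le> 3 * TT x (Suc n)" "0 \<le> hahn_norm (tailseq n x)"
proof -
  let ?t = "tailseq n x"
  let ?b = "\<lambda>k. real k * cmod (?t k - ?t (Suc k))"
  have beq: "?b k = (if k = n then real n * cmod (x (Suc n)) else 0) + (if n < k then aa x k else 0)" for k
    unfolding tailseq_def aa_def by auto
  have s1: "(\<lambda>k. if k = n then real n * cmod (x (Suc n)) else 0) sums (real n * cmod (x (Suc n)))"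
    using sums_single[of n "\<lambda>_. real n * cmod (x (Suc n))"] by simp
  have "(\<lambda>i. (\<lambda>k. if n < k then aa x k else 0) (i + Suc n)) sums TT x (Suc n)"
  proof -
    have "summable (\<lambda>j. aa x (j + Suc n))" using sa summable_iff_shift[of "aa x" "Suc n"] by blast
    thus ?thesis unfolding TT_def by (simp add: summable_sums del: add_Suc_right)
  qed
  hence s2: "(\<lambda>k. if n < k then aa x k else 0) sums TT x (Suc n)"
    by (subst (asm) sums_zero_iff_shift) auto
  have "?b sums (real n * cmod (x (Suc n)) + TT x (Suc n))"
    unfolding beq by (rule sums_add[OF s1 s2])
  hence sb: "suminf ?b = real n * cmod (x (Suc n)) + TT x (Suc n)" by (rule sums_unique[symmetric])
  have tb: "cmod (?t k) \<le> TT x (Suc n)" for k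
  proof (cases "k \<le> n")
    case True thus ?thesis using TT_nonneg by (simp add: tailseq_def)
  next
    case False
    hence "cmod (x k) \<le> TT x k" using xbound[of 1 k] by simp
    also have "\<dots> \<le> TT x (Suc n)" using False by (intro TT_mono) auto
    finally show ?thesis using False by (simp add: tailseq_def)
  qed
  have sup: "(SUP k. cmod (?t k)) \<le> TT x (Suc n)"
    by (rule cSUP_least) (use tb in auto)
  have bdd: "bdd_above (range (\<lambda>k. cmod (?t k)))"
    by (rule bdd_aboveI2[where M="TT x (Suc n)"]) (rule tb)
  have sup0: "0 \<le> (SUP k. cmod (?t k))"
    using cSUP_upper[OF _ bdd, of 0] by (meson UNIV_I norm_ge_zero order_trans)
  have nb: "real n * cmod (x (Suc n)) \<le> TT x (Suc n)" using xbound[of "real n" "Suc n"] by simp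
  show "hahn_norm ?t \<le> 3 * TT x (Suc n)"
    unfolding hahn_norm_def sb using sup nb by simp
  show "0 \<le> hahn_norm ?t"
    unfolding hahn_norm_def sb using sup0 TT_nonneg[of "Suc n"] by simp
qed

end


lemma point_empty: "point_spectrum_Delta_adj = {}"
proof -
  { fix \<alpha> f assume fd: "f \<in> hahn_dual" and eig: "\<forall>x\<in>hahn. \<alpha> * f x - Delta_adj f x = 0"
    from fd have add: "\<And>x y. x\<in>hahn \<Longrightarrow> y\<in>hahn \<Longrightarrow> f (\<lambda>k. x k + y k) = f x + f y"
      and hom: "\<And>c x. x\<in>hahn \<Longrightarrow> f (\<lambda>k. c * x k) = c * f x"
      and bd: "\<exists>C. \<forall>x\<in>hahn. cmod (f x) \<le> C * hahn_norm x" unfolding hahn_dual_def by auto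
    have eig': "\<alpha> * f x = f (Delta x)" if "x \<in> hahn" for x
      using eig that unfolding Delta_adj_def by auto
    define e :: "nat \<Rightarrow> nat \<Rightarrow> complex" where "e k = (\<lambda>j. if j = k then 1 else 0)" for k
    have eh: "e k \<in> hahn" for k unfolding e_def by (rule fin_supp_hahn[of k]) auto
    have eq0: "\<alpha> * f (e 0) = f (e 0)"
    proof -
      have "Delta (e 0) = e 0" unfolding Delta_def e_def by auto
      thus ?thesis using eig'[OF eh[of 0]] by auto
    qed
    have eqS: "\<alpha> * f (e (Suc m)) = f (e (Suc m)) - f (e m)" for m
    proof -
      have mh: "(\<lambda>k. (-1) * e m k) \<in> hahn" unfolding e_def by (rule fin_supp_hahn[of m]) auto
      have "Delta (e (Suc m)) = (\<lambda>k. e (Suc m) k + (\<lambda>k. (-1) * e m k) k)"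
        unfolding Delta_def e_def by auto
      hence "f (Delta (e (Suc m))) = f (e (Suc m)) + f (\<lambda>k. (-1) * e m k)"
        using add[OF eh[of "Suc m"] mh] by simp
      also have "\<dots> = f (e (Suc m)) - f (e m)" using hom[OF eh[of m], of "-1"] by simp
      finally show ?thesis using eig'[OF eh[of "Suc m"]] by simp
    qed
    have ce: "f (e m) = 0" for m
    proof (cases "\<alpha> = 1")
      case True thus ?thesis using eqS[of m] by simp
    next
      case False
      have cancel: "\<alpha> * c = c - d \<Longrightarrow> d = 0 \<Longrightarrow> c = 0" for c d
      proof -
        assume "\<alpha> * c = c - d" "d = 0"
        hence "(\<alpha> - 1) * c = 0" by (simp add: algebra_simps)
        thus "c = 0" using False by simp
      qed
      show ?thesis
      proof (induction m)
        case 0 show ?case using eq0 cancel[of "f (e 0)" 0] by simp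
      next
        case (Suc m) show ?case using eqS[of m] Suc cancel by blast
      qed
    qed
    have fz: "\<forall>y. (\<forall>k>n. y k = 0) \<longrightarrow> f y = 0" for n
    proof (induction n)
      case 0
      show ?case
      proof (intro allI impI)
        fix y :: "nat \<Rightarrow> complex" assume y: "\<forall>k>0. y k = 0"
        have "y = (\<lambda>k. y 0 * e 0 k)" using y unfolding e_def by (auto simp: fun_eq_iff)
        hence "f y = y 0 * f (e 0)" using hom[OF eh[of 0], of "y 0"] by metis
        thus "f y = 0" using ce by simp
      qed
    next
      case (Suc n)
      show ?case
      proof (intro allI impI)
        fix y :: "nat \<Rightarrow> complex" assume y: "\<forall>k>Suc n. y k = 0"
        have th: "trunc n y \<in> hahn" unfolding trunc_def by (rule fin_supp_hahn[of n]) auto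
        have yeq: "y = (\<lambda>k. trunc n y k + (\<lambda>k. y (Suc n) * e (Suc n) k) k)"
          using y unfolding e_def trunc_def by (auto simp: fun_eq_iff)
        have eh2: "(\<lambda>k. y (Suc n) * e (Suc n) k) \<in> hahn" unfolding e_def
          by (rule fin_supp_hahn[of "Suc n"]) auto
        have "f y = f (\<lambda>k. trunc n y k + (\<lambda>k. y (Suc n) * e (Suc n) k) k)"
          by (rule arg_cong[OF yeq])
        also have "\<dots> = f (trunc n y) + f (\<lambda>k. y (Suc n) * e (Suc n) k)"
          by (rule add[OF th eh2])
        also have "\<dots> = f (trunc n y) + y (Suc n) * f (e (Suc n))" using hom[OF eh] by simp
        also have "f (trunc n y) = 0" using Suc.IH unfolding trunc_def by auto
        finally show "f y = 0" using ce by simp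
      qed
    qed
    obtain C where C: "\<forall>x\<in>hahn. cmod (f x) \<le> C * hahn_norm x" using bd by blast
    have "f x = 0" if xh: "x \<in> hahn" for x
    proof -
      have b: "cmod (f x) \<le> \<bar>C\<bar> * 3 * TT x (Suc n)" for n
      proof -
        have th: "trunc n x \<in> hahn" unfolding trunc_def by (rule fin_supp_hahn[of n]) auto
        have tt: "tailseq n x \<in> hahn" unfolding tailseq_def by (rule hahn_eventually_eq[OF xh, of n]) auto
        have "x = (\<lambda>k. trunc n x k + tailseq n x k)" unfolding trunc_def tailseq_def by auto
        hence "f x = f (trunc n x) + f (tailseq n x)" using add[OF th tt] by metis
        also have "f (trunc n x) = 0" using fz[of n] unfolding trunc_def by auto
        finally have "cmod (f x) = cmod (f (tailseq n x))" by simp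
        also have "\<dots> \<le> C * hahn_norm (tailseq n x)" using C tt by blast
        also have "\<dots> \<le> \<bar>C\<bar> * hahn_norm (tailseq n x)"
          using tail_norm(2)[OF xh, of n] by (intro mult_right_mono) auto
        also have "\<dots> \<le> \<bar>C\<bar> * (3 * TT x (Suc n))"
          using tail_norm(1)[OF xh, of n] by (intro mult_left_mono) auto
        finally show ?thesis by simp
      qed
      have "(\<lambda>n. \<bar>C\<bar> * 3 * TT x (Suc n)) \<longlonglongrightarrow> \<bar>C\<bar> * 3 * 0"
        by (intro tendsto_mult tendsto_const) (rule LIMSEQ_Suc[OF TT_lim[OF xh]])
      hence "cmod (f x) \<le> 0" using b by (intro LIMSEQ_le_const) auto
      thus ?thesis by simp
    qed
  }
  thus ?thesis unfolding point_spectrum_Delta_adj_def by blast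
qed


lemma summable_kpow:
  fixes r :: real assumes "0 \<le> r" "r < 1"
  shows "summable (\<lambda>k. real k * r ^ k)"
proof -
  have "summable (\<lambda>n. diffs (\<lambda>_. 1::real) n * r ^ n)"
    by (rule termdiff_converges[of r 1]) (use assms in \<open>auto intro: summable_geometric\<close>)
  hence s: "summable (\<lambda>n. real (Suc n) * r ^ n)" by (simp add: diffs_def)
  show ?thesis
    by (rule summable_comparison_test[OF _ s]) (use assms in \<open>auto intro!: exI[of _ 0] mult_right_mono\<close>)
qed

lemma resid_empty: "residual_spectrum_Delta = {}"
proof -
  { fix \<alpha> assume inj: "inj_on (\<lambda>x. (\<lambda>k. \<alpha> * x k - Delta x k)) hahn"
       and nd: "\<not> (\<forall>y\<in>hahn. \<forall>\<epsilon>>0. \<exists>x\<in>hahn. hahn_norm (\<lambda>k. y k - (\<alpha> * x k - Delta x k)) < \<epsilon>)"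
    define \<beta> where "\<beta> = 1 - \<alpha>"
    have bge: "1 \<le> cmod \<beta>"
    proof (rule ccontr)
      assume "\<not> 1 \<le> cmod \<beta>" hence lt: "cmod \<beta> < 1" by simp
      define z where "z = (\<lambda>k. \<beta> ^ k)"
      have "summable (\<lambda>k. cmod \<alpha> * (real k * cmod \<beta> ^ k))"
        by (intro summable_mult summable_kpow lt) simp
      moreover have "(\<lambda>k. real k * cmod (z k - z (Suc k))) = (\<lambda>k. cmod \<alpha> * (real k * cmod \<beta> ^ k))"
      proof
        fix k
        have "z k - z (Suc k) = \<beta> ^ k * \<alpha>" unfolding z_def \<beta>_def by (simp add: algebra_simps)
        thus "real k * cmod (z k - z (Suc k)) = cmod \<alpha> * (real k * cmod \<beta> ^ k)"
          by (simp add: norm_mult norm_power)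
      qed
      ultimately have "summable (\<lambda>k. real k * cmod (z k - z (Suc k)))" by metis
      moreover have "z \<longlonglongrightarrow> 0" unfolding z_def by (rule LIMSEQ_power_zero) (use lt in simp)
      ultimately have zh: "z \<in> hahn" unfolding hahn_def by auto
      have "(\<lambda>k. \<alpha> * z k - Delta z k) = (\<lambda>k. \<alpha> * (\<lambda>k. 0) k - Delta (\<lambda>k. 0) k)"
        unfolding Delta_def z_def \<beta>_def by (auto simp: fun_eq_iff algebra_simps)
      from inj_onD[OF inj this zh zero_hahn] have "z = (\<lambda>k. 0)" .
      hence "z 0 = 0" by simp
      thus False unfolding z_def by simp
    qed
    hence bnz: "\<beta> \<noteq> 0" by auto
    have "\<forall>y\<in>hahn. \<forall>\<epsilon>>0. \<exists>x\<in>hahn. hahn_norm (\<lambda>k. y k - (\<alpha> * x k - Delta x k)) < \<epsilon>"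
    proof (intro ballI allI impI)
      fix y :: "nat \<Rightarrow> complex" and \<epsilon> :: real assume yh: "y \<in> hahn" and ep: "\<epsilon> > 0"
      have "eventually (\<lambda>m. TT y m < \<epsilon> / 3) sequentially"
        using order_tendstoD(2)[OF TT_lim[OF yh], of "\<epsilon> / 3"] ep by simp
      then obtain n where nN: "\<And>m. m \<ge> n \<Longrightarrow> TT y m < \<epsilon> / 3"
        unfolding eventually_sequentially by blast
      define ib where "ib = inverse \<beta>"
      define x where "x k = - (\<Sum>j=k..n. y j * ib ^ (j - k + 1))" for k
      have xh: "x \<in> hahn" unfolding x_def by (rule fin_supp_hahn[of n]) auto
      have req: "\<alpha> * x k - Delta x k = trunc n y k" for k
      proof (cases "k \<le> n")
        case True
        have "\<alpha> * x k - Delta x k = x (Suc k) - \<beta> * x k"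
          unfolding Delta_def \<beta>_def by (simp add: algebra_simps)
        also have "\<beta> * x k = - (y k + (\<Sum>j=Suc k..n. y j * ib ^ (j - Suc k + 1)))"
        proof -
          have "{k..n} = insert k {Suc k..n}" using True by auto
          hence xk: "x k = - (y k * ib + (\<Sum>j=Suc k..n. y j * ib ^ (j - k + 1)))"
            unfolding x_def by simp
          hence "\<beta> * x k = - (\<beta> * ib * y k + (\<Sum>j=Suc k..n. \<beta> * (y j * ib ^ (j - k + 1))))"
          proof -
            have "\<beta> * x k = - (\<beta> * (y k * ib) + \<beta> * (\<Sum>j=Suc k..n. y j * ib ^ (j - k + 1)))"
              using xk by (simp only: distrib_left minus_add_distrib mult_minus_right)
            thus ?thesis by (simp only: sum_distrib_left) (simp add: mult_ac)
          qed
          also have "(\<Sum>j=Suc k..n. \<beta> * (y j * ib ^ (j - k + 1))) = (\<Sum>j=Suc k..n. y j * ib ^ (j - Suc k + 1))"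
          proof (rule sum.cong)
            fix j assume "j \<in> {Suc k..n}"
            hence "j - k + 1 = Suc (j - Suc k + 1)" by auto
            thus "\<beta> * (y j * ib ^ (j - k + 1)) = y j * ib ^ (j - Suc k + 1)"
              using bnz unfolding ib_def by (simp add: field_simps)
          qed simp
          also have "\<beta> * ib = 1" using bnz unfolding ib_def by simp
          finally show ?thesis by simp
        qed
        also have "x (Suc k) = - (\<Sum>j=Suc k..n. y j * ib ^ (j - Suc k + 1))" unfolding x_def ..
        finally show ?thesis using True unfolding trunc_def by simp
      next
        case False
        thus ?thesis unfolding x_def trunc_def Delta_def by simp
      qed
      have "(\<lambda>k. y k - (\<alpha> * x k - Delta x k)) = tailseq n y"
        unfolding req trunc_def tailseq_def by auto
      hence "hahn_norm (\<lambda>k. y k - (\<alpha> * x k - Delta x k)) \<le> 3 * TT y (Suc n)"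
        using tail_norm(1)[OF yh, of n] by simp
      also have "\<dots> < \<epsilon>" using nN[of "Suc n"] by simp
      finally show "\<exists>x\<in>hahn. hahn_norm (\<lambda>k. y k - (\<alpha> * x k - Delta x k)) < \<epsilon>"
        using xh by blast
    qed
    with nd have False by blast
  }
  thus ?thesis unfolding residual_spectrum_Delta_def by blast
qed

theorem theorem4p5:
  shows "residual_spectrum_Delta = point_spectrum_Delta_adj"
  using resid_empty point_empty by simp

end
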